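(* Let $(m,q,d,\tau)$ be suitable parameters (in the sense defined in the context) and let $\Pi$ be the shifted projection protocol for these parameters. Then $\Pi$ is informative and perfectly safe.
   Context: Agents: $\mathcal A=\{A,B_1,\dots,B_m\}$, speaking in the fixed order $A,B_1,\dots,B_m$. A distribution type is a vector $\tau=(\tau_P)_{P\in\mathcal A}$ of positive integers, $|\tau|=\sum_P\tau_P$. The deck $\Omega$ is a set of $|\tau|$ cards; a deal of type $\tau$ is a partition $H=(H_P)_{P\in\mathcal A}$ of $\Omega$ with $|H_P|=\tau_P$ ($H_P$ is the hand of $P$). Suitable parameters: $(m,q,d,\tau)$ with $m>1$, $q>m$ a prime power, $d>0$ an integer, $\tau$ a distribution type over $\mathcal A$ with $|\tau|=q^{d+1}$, $\tau_A=q^{d+1}-q^d$ and $\tau_{B_k}>q^{d-1}$ for every $k\in[1,m]$; the deck $\Omega$ has $q^{d+1}$ cards. Geometry over the field $\mathbb F_q$: a transversal hyperplane of $\mathbb F_q^{d+1}$ is the set of points $x$ with $x_{d+1}=a_1x_1+\dots+a_dx_d+b$ for some $a_1,\dots,a_d,b\in\mathbb F_q$; its slope is $\sigma(V)=(a_1,\dots,a_d)\in\mathbb F_q^d$. Let $\pi:\mathbb F_q^{d+1}\to\mathbb F_q^d$ be projection onto the first $d$ coordinates; for a transversal hyperplane $V$, $\pi|_V$ is a bijection onto $\mathbb F_q^d$ with inverse $\iota_V$. Define $\pi^V_{\downarrow}:V\to\mathbb F_q^d$, $\pi^V_\downarrow(w)=\pi(w)+\sigma(V)$, and $\pi^V_\uparrow:\mathbb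 F_q^d\to V$, $\pi^V_\uparrow(y)=\iota_V(y-\sigma(V))$. Shifted projection protocol: tokens are maps $f:\Omega\to\mathbb F_q^{d+1}$ and subsets of $\mathbb F_q^d$. A run is a finite sequence of tokens; $\rho*a$ appends $a$, $\rho_{<k}$ is the prefix of length $k$. For a deal $H$, its maximal executions are the tuples $(H,f,X_1,\dots,X_m)$ where $f:\Omega\to\mathbb F_q^{d+1}$ is a bijection such that $V=\mathbb F_q^{d+1}\setminus f[H_A]$ is a transversal hyperplane, and $X_k=\pi^V_\downarrow[f[H_{B_k}]]$ for each $k\in[1,m]$. Set $\Pi(H,\rho)$ = set of tokens $a$ such that $(H,\rho*a)$ is an initial segment of a maximal execution. An execution is a pair $(H,\rho)$, $\rho=a_0,\dots,a_n$, with $a_k\in\Pi(H,\rho_{<k})$ for all $k\le n$; $\rho$ is a run of $\Pi$ if some $(H,\rho)$ is an execution; an execution $(H,\rho)$ is terminal if $\Pi(H,\rho)=\emptyset$. Informative: for every terminal execution $(H,\rho)$ and every agent $P$, there is no execution $(H',\rho)$ with $H'\neq H$ and $H'_P=H_P$. Probability model: a deal $H$ of type $\tau$ is drawn uniformly at random; then starting from the empty run, while $\Pi(H,\rho)\ne\emptyset$ for the current run $\rho$, a token is drawn uniformly from $\Pi(H,\rho)$ and appended. For a run $\rho$, "$\rho$" is the event that the first $|\rho|$ tokens produced are exactly $\rho$. Perfectly safe: for every run $\rho$ of $\Pi$, every card $c\in\Omega$ and every agent $P$, $\Pr(c\in H_P\mid\rho)=\tau_P/|\tau|$. *)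

theory Defs
  imports Complex_Main "HOL-Library.FuncSet" "HOL-Library.Cardinality"
begin

text \<open>Agents are the natural numbers 0..m: agent 0 is A, agent k (1 \<le> k \<le> m) is B_k.
  The field F_q is a type 'a of class {finite, field}, so q = CARD('a).
  The space F_q^n is represented as functions nat \<Rightarrow> 'a vanishing from index n on
  (coordinates 0..n-1).  In F_q^(d+1) the last coordinate x_(d+1) is index d.\<close>

definition pts :: "nat \<Rightarrow> (nat \<Rightarrow> 'a::zero) set" where
  "pts n = {x. \<forall>i\<ge>n. x i = 0}"

definition hyperplane :: "nat \<Rightarrow> (nat \<Rightarrow> 'a::field) \<Rightarrow> 'a \<Rightarrow> (nat \<Rightarrow> 'a) set" where
  "hyperplane d a b = {x \<in> pts (Suc d). x d = (\<Sum>i<d. a i * x i) + b}"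

definition transversal :: "nat \<Rightarrow> (nat \<Rightarrow> 'a::field) set \<Rightarrow> bool" where
  "transversal d V \<longleftrightarrow> (\<exists>a\<in>pts d. \<exists>b. V = hyperplane d a b)"

definition slope :: "nat \<Rightarrow> (nat \<Rightarrow> 'a::field) set \<Rightarrow> nat \<Rightarrow> 'a" where
  "slope d V = (THE a. a \<in> pts d \<and> (\<exists>b. V = hyperplane d a b))"

definition proj :: "nat \<Rightarrow> (nat \<Rightarrow> 'a::zero) \<Rightarrow> nat \<Rightarrow> 'a" where
  "proj d x = (\<lambda>i. if i < d then x i else 0)"

definition proj_down :: "nat \<Rightarrow> (nat \<Rightarrow> 'a::field) set \<Rightarrow> (nat \<Rightarrow> 'a) \<Rightarrow> nat \<Rightarrow> 'a" where
  "proj_down d V w = (\<lambda>i. proj d w i + slope d V i)"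

definition is_deal :: "'c set \<Rightarrow> nat \<Rightarrow> (nat \<Rightarrow> nat) \<Rightarrow> (nat \<Rightarrow> 'c set) \<Rightarrow> bool" where
  "is_deal \<Omega> m \<tau> H \<longleftrightarrow>
     (\<forall>P\<le>m. H P \<subseteq> \<Omega> \<and> card (H P) = \<tau> P) \<and>
     (\<forall>P\<le>m. \<forall>Q\<le>m. P \<noteq> Q \<longrightarrow> H P \<inter> H Q = {}) \<and>
     (\<Union>P\<le>m. H P) = \<Omega> \<and> (\<forall>P>m. H P = {})"

text \<open>Tokens: maps Omega \<rightarrow> F_q^(d+1) (extensional on Omega) and subsets of F_q^d.\<close>
datatype ('c, 'a) token = Fmap "'c \<Rightarrow> nat \<Rightarrow> 'a" | Sub "(nat \<Rightarrow> 'a) set"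

definition max_exec :: "'c set \<Rightarrow> nat \<Rightarrow> nat \<Rightarrow> (nat \<Rightarrow> 'c set) \<Rightarrow> ('c, 'a::field) token list \<Rightarrow> bool" where
  "max_exec \<Omega> m d H L \<longleftrightarrow>
     (\<exists>f. f \<in> \<Omega> \<rightarrow>\<^sub>E pts (Suc d) \<and> bij_betw f \<Omega> (pts (Suc d)) \<and>
          transversal d (pts (Suc d) - f ` H 0) \<and>
          L = Fmap f # map (\<lambda>k. Sub (proj_down d (pts (Suc d) - f ` H 0) ` f ` H k)) [1..<Suc m])"

definition Pi_prot :: "'c set \<Rightarrow> nat \<Rightarrow> nat \<Rightarrow> (nat \<Rightarrow> 'c set) \<Rightarrow> ('c, 'a::field) token list \<Rightarrow> ('c, 'a) token set" where
  "Pi_prot \<Omega> m d H \<rho> = {a. \<exists>L L'. max_exec \<Omega> m d H L \<and> L = \<rho> @ [a] @ L'}"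

definition execution :: "'c set \<Rightarrow> nat \<Rightarrow> nat \<Rightarrow> (nat \<Rightarrow> 'c set) \<Rightarrow> ('c, 'a::field) token list \<Rightarrow> bool" where
  "execution \<Omega> m d H \<rho> \<longleftrightarrow> (\<forall>k<length \<rho>. \<rho> ! k \<in> Pi_prot \<Omega> m d H (take k \<rho>))"

definition is_run :: "'c set \<Rightarrow> nat \<Rightarrow> (nat \<Rightarrow> nat) \<Rightarrow> nat \<Rightarrow> ('c, 'a::field) token list \<Rightarrow> bool" where
  "is_run \<Omega> m \<tau> d \<rho> \<longleftrightarrow> (\<exists>H. is_deal \<Omega> m \<tau> H \<and> execution \<Omega> m d H \<rho>)"

definition terminal :: "'c set \<Rightarrow> nat \<Rightarrow> nat \<Rightarrow> (nat \<Rightarrow> 'c set) \<Rightarrow> ('c, 'a::field) token list \<Rightarrow> bool" where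
  "terminal \<Omega> m d H \<rho> \<longleftrightarrow> execution \<Omega> m d H \<rho> \<and> Pi_prot \<Omega> m d H \<rho> = {}"

definition informative :: "'a::field itself \<Rightarrow> 'c set \<Rightarrow> nat \<Rightarrow> (nat \<Rightarrow> nat) \<Rightarrow> nat \<Rightarrow> bool" where
  "informative _ \<Omega> m \<tau> d \<longleftrightarrow>
     (\<forall>H (\<rho> :: ('c, 'a) token list) P. is_deal \<Omega> m \<tau> H \<and> terminal \<Omega> m d H \<rho> \<and> P \<le> m \<longrightarrow>
        \<not> (\<exists>H'. is_deal \<Omega> m \<tau> H' \<and> execution \<Omega> m d H' \<rho> \<and> H' \<noteq> H \<and> H' P = H P))"

text \<open>Probability (given the deal H) that the first |rho| tokens are exactly rho, when
  tokens are drawn uniformly from Pi(H, current run) until it is empty.\<close>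
definition run_weight :: "'c set \<Rightarrow> nat \<Rightarrow> nat \<Rightarrow> (nat \<Rightarrow> 'c set) \<Rightarrow> ('c, 'a::field) token list \<Rightarrow> real" where
  "run_weight \<Omega> m d H \<rho> =
     (\<Prod>k<length \<rho>. if \<rho> ! k \<in> Pi_prot \<Omega> m d H (take k \<rho>)
                      then 1 / real (card (Pi_prot \<Omega> m d H (take k \<rho>))) else 0)"

text \<open>Pr(E(H) and rho), with H a uniformly random deal of type tau.\<close>
definition prob_and_run :: "'c set \<Rightarrow> nat \<Rightarrow> (nat \<Rightarrow> nat) \<Rightarrow> nat \<Rightarrow> ((nat \<Rightarrow> 'c set) \<Rightarrow> bool) \<Rightarrow> ('c, 'a::field) token list \<Rightarrow> real" where
  "prob_and_run \<Omega> m \<tau> d E \<rho> =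
     (\<Sum>H\<in>{H. is_deal \<Omega> m \<tau> H \<and> E H}. run_weight \<Omega> m d H \<rho>) / real (card {H. is_deal \<Omega> m \<tau> H})"

definition cond_prob :: "'c set \<Rightarrow> nat \<Rightarrow> (nat \<Rightarrow> nat) \<Rightarrow> nat \<Rightarrow> ((nat \<Rightarrow> 'c set) \<Rightarrow> bool) \<Rightarrow> ('c, 'a::field) token list \<Rightarrow> real" where
  "cond_prob \<Omega> m \<tau> d E \<rho> = prob_and_run \<Omega> m \<tau> d E \<rho> / prob_and_run \<Omega> m \<tau> d (\<lambda>_. True) \<rho>"

definition perfectly_safe :: "'a::field itself \<Rightarrow> 'c set \<Rightarrow> nat \<Rightarrow> (nat \<Rightarrow> nat) \<Rightarrow> nat \<Rightarrow> bool" where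
  "perfectly_safe _ \<Omega> m \<tau> d \<longleftrightarrow>
     (\<forall>(\<rho> :: ('c, 'a) token list) c P. is_run \<Omega> m \<tau> d \<rho> \<and> c \<in> \<Omega> \<and> P \<le> m \<longrightarrow>
        cond_prob \<Omega> m \<tau> d (\<lambda>H. c \<in> H P) \<rho> = real (\<tau> P) / real (\<Sum>Q\<le>m. \<tau> Q))"

end

theory Submission
  imports Defs
begin


definition dot :: "nat \<Rightarrow> (nat \<Rightarrow> 'a::field) \<Rightarrow> (nat \<Rightarrow> 'a) \<Rightarrow> 'a" where
  "dot d u x = (\<Sum>i<d. u i * x i)"

definition shear :: "nat \<Rightarrow> (nat \<Rightarrow> 'a::field) \<Rightarrow> 'a \<Rightarrow> (nat \<Rightarrow> 'a) \<Rightarrow> nat \<Rightarrow> 'a" where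
  "shear d u s x = (\<lambda>i. if i < d then x i + u i else if i = d then x d - dot d u x + s else 0)"

definition unshear :: "nat \<Rightarrow> (nat \<Rightarrow> 'a::field) \<Rightarrow> 'a \<Rightarrow> (nat \<Rightarrow> 'a) \<Rightarrow> nat \<Rightarrow> 'a" where
  "unshear d u s y = (\<lambda>i. if i < d then y i - u i else if i = d then y d + dot d u (\<lambda>j. y j - u j) - s else 0)"

lemma shear_pts: "shear d u s x \<in> pts (Suc d)"
  by (auto simp: shear_def pts_def)

lemma unshear_pts: "unshear d u s x \<in> pts (Suc d)"
  by (auto simp: unshear_def pts_def)

lemma dot_cong: "(\<And>i. i < d \<Longrightarrow> x i = y i) \<Longrightarrow> dot d u x = dot d u y"
  unfolding dot_def by (rule sum.cong) auto

lemma shear_unshear: "shear d u s (unshear d u s y) = (\<lambda>i. if i \<le> d then y i else 0)"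
proof -
  have "dot d u (unshear d u s y) = dot d u (\<lambda>j. y j - u j)"
    by (rule dot_cong) (auto simp: unshear_def)
  then show ?thesis by (auto simp: shear_def unshear_def fun_eq_iff)
qed

lemma unshear_shear: "x \<in> pts (Suc d) \<Longrightarrow> unshear d u s (shear d u s x) = x"
proof -
  assume x: "x \<in> pts (Suc d)"
  have "dot d u (\<lambda>j. shear d u s x j - u j) = dot d u x"
    by (rule dot_cong) (auto simp: shear_def)
  then show ?thesis using x by (auto simp: shear_def unshear_def fun_eq_iff pts_def)
qed

lemma shear_bij: "bij_betw (shear d u s) (pts (Suc d)) (pts (Suc d))"
proof (rule bij_betw_byWitness[where f'="unshear d u s"])
  show "\<forall>a\<in>pts (Suc d). unshear d u s (shear d u s a) = a" using unshear_shear by blast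
  show "\<forall>a'\<in>pts (Suc d). shear d u s (unshear d u s a') = a'"
    by (auto simp: shear_unshear pts_def fun_eq_iff)
qed (auto simp: shear_pts unshear_pts)

lemma hyp_mem: "x \<in> hyperplane d a b \<longleftrightarrow> x \<in> pts (Suc d) \<and> x d = dot d a x + b"
  by (simp add: hyperplane_def dot_def)

lemma shear_key:
  "shear d u s x d - dot d (\<lambda>i. a i - u i) (shear d u s x) =
   x d - dot d a x + (s - dot d a u + dot d u u)"
proof -
  have "dot d (\<lambda>i. a i - u i) (shear d u s x) = (\<Sum>i<d. (a i - u i) * (x i + u i))"
    unfolding dot_def by (rule sum.cong) (auto simp: shear_def)
  also have "\<dots> = dot d a x + dot d a u - dot d u x - dot d u u"
    by (simp add: dot_def algebra_simps sum.distrib sum_subtractf)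
  finally show ?thesis by (simp add: shear_def)
qed

lemma shear_hyp:
  "shear d u s ` hyperplane d a b = hyperplane d (\<lambda>i. a i - u i) (b + (s - dot d a u + dot d u u))"
  (is "?L = ?R")
proof
  show "?L \<subseteq> ?R"
  proof
    fix y assume "y \<in> ?L"
    then obtain x where x: "x \<in> hyperplane d a b" "y = shear d u s x" by auto
    show "y \<in> ?R" using x shear_key[of d u s x a] by (auto simp: hyp_mem shear_pts algebra_simps)
  qed
  show "?R \<subseteq> ?L"
  proof
    fix y assume y: "y \<in> ?R"
    then have yp: "y \<in> pts (Suc d)" by (simp add: hyp_mem)
    define x where "x = unshear d u s y"
    have yx: "y = shear d u s x" using yp by (auto simp: x_def shear_unshear pts_def fun_eq_iff)
    have e1: "y d - dot d (\<lambda>i. a i - u i) y = b + (s - dot d a u + dot d u u)"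
      using y by (simp add: hyp_mem diff_eq_eq)
    have "x d - dot d a x = b"
      using e1 shear_key[of d u s x a] yx by simp
    then have "x \<in> hyperplane d a b"
      by (simp add: hyp_mem x_def unshear_pts diff_eq_eq)
    then show "y \<in> ?L" using yx by auto
  qed
qed

lemma dot_single:
  assumes "i < d" "\<And>j. j < d \<Longrightarrow> j \<noteq> i \<Longrightarrow> x j = 0"
  shows "dot d a x = a i * x i"
proof -
  have "dot d a x = (\<Sum>j<d. if j = i then a i * x i else 0)"
    unfolding dot_def by (rule sum.cong) (auto simp: assms)
  also have "\<dots> = a i * x i" using assms(1) by simp
  finally show ?thesis .
qed

lemma hyp_unique:
  assumes a: "a \<in> pts d" and a': "a' \<in> pts d" and eq: "hyperplane d a b = hyperplane d a' b'"
  shows "a = a' \<and> b = b'"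
proof -
  define z where "z = (\<lambda>j. if j = d then b else (0::'a))"
  have dz: "dot d c z = 0" for c unfolding dot_def by (rule sum.neutral) (auto simp: z_def)
  have "z \<in> hyperplane d a b" by (simp add: hyp_mem dz) (auto simp: z_def pts_def)
  then have "z \<in> hyperplane d a' b'" using eq by simp
  then have bb: "b = b'" by (simp add: hyp_mem dz) (simp add: z_def)
  have "a i = a' i" for i
  proof (cases "i < d")
    case True
    define e where "e = (\<lambda>j. if j = i then 1 else if j = d then a i + b else (0::'a))"
    have de: "dot d c e = c i" for c using True by (subst dot_single[of i]) (auto simp: e_def)
    have "e \<in> hyperplane d a b" using True by (simp add: hyp_mem de) (auto simp: e_def pts_def)
    then have "e \<in> hyperplane d a' b'" using eq by simp
    then show ?thesis using True bb by (simp add: hyp_mem de) (simp add: e_def)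
  next
    case False
    then show ?thesis using a a' by (simp add: pts_def)
  qed
  then show ?thesis using bb by auto
qed

lemma slope_hyp: "a \<in> pts d \<Longrightarrow> slope d (hyperplane d a b) = a"
  unfolding slope_def
  by (rule the_equality) (auto dest: hyp_unique)

lemma slope_in: "transversal d V \<Longrightarrow> slope d V \<in> pts d"
  unfolding transversal_def by (auto simp: slope_hyp)

lemma proj_down_shear:
  assumes a: "a \<in> pts d" and u: "u \<in> pts d"
  shows "proj_down d (shear d u s ` hyperplane d a b) (shear d u s w) = proj_down d (hyperplane d a b) w"
proof -
  have "(\<lambda>i. a i - u i) \<in> pts d" using a u by (simp add: pts_def)
  then have "slope d (shear d u s ` hyperplane d a b) = (\<lambda>i. a i - u i)"
    by (simp add: shear_hyp slope_hyp)
  then show ?thesis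
    using a u by (auto simp: proj_down_def slope_hyp proj_def shear_def fun_eq_iff pts_def)
qed

lemma shear_trans:
  assumes "p \<in> pts (Suc d)" "p' \<in> pts (Suc d)"
  shows "\<exists>u\<in>pts d. \<exists>s. shear d u s p = p'"
proof -
  define u where "u = (\<lambda>i. if i < d then p' i - p i else 0)"
  define s where "s = p' d - p d + dot d u p"
  have "u \<in> pts d" by (simp add: u_def pts_def)
  moreover have "shear d u s p = p'"
    using assms by (auto simp: shear_def u_def s_def fun_eq_iff pts_def not_less_eq)
  ultimately show ?thesis by blast
qed

lemma pd_inj:
  assumes "a \<in> pts d"
  shows "inj_on (proj_down d (hyperplane d a b)) (hyperplane d a b)"
proof (rule inj_onI)
  fix x y assume x: "x \<in> hyperplane d a b" and y: "y \<in> hyperplane d a b"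
    and e: "proj_down d (hyperplane d a b) x = proj_down d (hyperplane d a b) y"
  have c: "x i = y i" if "i < d" for i
    using fun_cong[OF e, of i] that by (simp add: proj_down_def proj_def)
  then have "dot d a x = dot d a y" by (rule dot_cong)
  then have "x d = y d" using x y by (simp add: hyp_mem)
  moreover have "x \<in> pts (Suc d)" "y \<in> pts (Suc d)" using x y by (auto simp: hyp_mem)
  ultimately show "x = y"
  proof (intro ext)
    fix i assume xd: "x d = y d" and px: "x \<in> pts (Suc d)" and py: "y \<in> pts (Suc d)"
    show "x i = y i"
    proof (cases "i < d")
      case True then show ?thesis by (rule c)
    next
      case False
      then consider "i = d" | "i \<ge> Suc d" by linarith
      then show ?thesis
        by cases (use xd px py in \<open>auto simp: pts_def\<close>)
    qed
  qed
qed



lemma pts_bij: "bij_betw (\<lambda>x. restrict x {..<n}) (pts n) ({..<n} \<rightarrow>\<^sub>E (UNIV::'a::zero set))"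
proof (rule bij_betw_byWitness[where f'="\<lambda>g i. if i < n then g i else 0"])
  show "\<forall>a\<in>pts n. (\<lambda>i. if i < n then restrict a {..<n} i else 0) = a"
    by (auto simp: pts_def fun_eq_iff)
  show "\<forall>a'\<in>{..<n} \<rightarrow>\<^sub>E UNIV. restrict (\<lambda>i. if i < n then a' i else 0) {..<n} = a'"
    by (auto simp: fun_eq_iff PiE_def extensional_def)
  show "(\<lambda>x. restrict x {..<n}) ` pts n \<subseteq> {..<n} \<rightarrow>\<^sub>E UNIV"
    by (intro image_subsetI) (simp only: restrict_PiE_iff, simp)
  show "(\<lambda>g i. if i < n then g i else 0) ` ({..<n} \<rightarrow>\<^sub>E UNIV) \<subseteq> pts n"
    by (intro image_subsetI) (simp add: pts_def)
qed

lemma finite_pts: "finite (pts n :: (nat \<Rightarrow> 'a::{finite,zero}) set)"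
  using bij_betw_finite[OF pts_bij[where 'a='a]] by (simp add: finite_PiE)

lemma card_pts: "card (pts n :: (nat \<Rightarrow> 'a::{finite,zero}) set) = CARD('a) ^ n"
  using bij_betw_same_card[OF pts_bij[where 'a='a, of n]] by (simp add: card_PiE)

lemma card_Z:
  assumes "i < d"
  shows "card {y \<in> pts d. y i = (0::'a::{finite,zero})} = CARD('a) ^ (d - 1)"
proof -
  let ?Z = "{y \<in> pts d. y i = (0::'a)}"
  have "bij_betw (\<lambda>(y,t). y(i:=t)) (?Z \<times> (UNIV::'a set)) (pts d)"
  proof (rule bij_betw_byWitness[where f'="\<lambda>x. (x(i:=0), x i)"])
  qed (use assms in \<open>auto simp: pts_def fun_eq_iff\<close>)
  then have "card (?Z \<times> (UNIV::'a set)) = card (pts d :: (nat \<Rightarrow> 'a) set)" by (rule bij_betw_same_card)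
  then have "card ?Z * CARD('a) = CARD('a) ^ d"
    by (simp add: card_cartesian_product card_pts)
  moreover have "CARD('a) ^ d = CARD('a) ^ (d - 1) * CARD('a)"
    using assms by (metis Suc_diff_1 gr_implies_not0 mult.commute not_gr_zero power_Suc)
  ultimately show ?thesis by simp
qed

lemma finite_hyp: "finite (hyperplane d a (b::'a::{finite,field}))"
  by (rule finite_subset[OF _ finite_pts[of "Suc d"]]) (auto simp: hyp_mem)

lemma hyp_inter_card:
  fixes a a' :: "nat \<Rightarrow> 'a::{finite,field}"
  assumes a: "a \<in> pts d" and a': "a' \<in> pts d" and ne: "hyperplane d a b \<noteq> hyperplane d a' b'"
  shows "card (hyperplane d a b \<inter> hyperplane d a' b') \<le> CARD('a) ^ (d - 1)"
proof (cases "a = a'")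
  case True
  then have "b \<noteq> b'" using ne by auto
  then have "hyperplane d a b \<inter> hyperplane d a' b' = {}" using True by (auto simp: hyp_mem)
  then show ?thesis by simp
next
  case False
  then obtain i where ai: "a i \<noteq> a' i" by auto
  have id: "i < d"
  proof (rule ccontr)
    assume "\<not> i < d" then show False using a a' ai by (simp add: pts_def)
  qed
  let ?I = "hyperplane d a b \<inter> hyperplane d a' b'"
  let ?Z = "{y \<in> pts d. y i = (0::'a)}"
  define \<psi> where "\<psi> x = (\<lambda>j. if j < d \<and> j \<noteq> i then x j else (0::'a))" for x :: "nat \<Rightarrow> 'a"
  have "inj_on \<psi> ?I"
  proof (rule inj_onI)
    fix x y assume x: "x \<in> ?I" and y: "y \<in> ?I" and e: "\<psi> x = \<psi> y"
    have c1: "x j = y j" if "j < d" "j \<noteq> i" for j using fun_cong[OF e, of j] that by (simp add: \<psi>_def)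
    have ex: "dot d a x + b = dot d a' x + b'" and ey: "dot d a y + b = dot d a' y + b'"
      using x y by (auto simp: hyp_mem)
    have "dot d (\<lambda>j. a j - a' j) (\<lambda>j. x j - y j) = (a i - a' i) * (x i - y i)"
      by (rule dot_single) (use id c1 in auto)
    moreover have "dot d (\<lambda>j. a j - a' j) (\<lambda>j. x j - y j) = (dot d a x - dot d a' x) - (dot d a y - dot d a' y)"
      by (simp add: dot_def algebra_simps sum.distrib sum_subtractf)
    moreover have "dot d a x - dot d a' x = b' - b" "dot d a y - dot d a' y = b' - b"
      using ex ey by (simp_all add: algebra_simps)
    ultimately have "(a i - a' i) * (x i - y i) = 0" by simp
    then have "x i = y i" using ai by simp
    then have c: "x j = y j" if "j < d" for j using c1 that by (cases "j = i") auto
    then have "dot d a x = dot d a y" by (rule dot_cong)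
    then have xd: "x d = y d" using x y by (simp add: hyp_mem)
    have px: "x \<in> pts (Suc d)" and py: "y \<in> pts (Suc d)" using x y by (auto simp: hyp_mem)
    show "x = y"
    proof (rule ext)
      fix j show "x j = y j"
      proof (cases "j < d")
        case True then show ?thesis by (rule c)
      next
        case False
        then consider "j = d" | "j \<ge> Suc d" by linarith
        then show ?thesis by cases (use xd px py in \<open>auto simp: pts_def\<close>)
      qed
    qed
  qed
  then have "card ?I = card (\<psi> ` ?I)" by (simp add: card_image)
  also have "\<dots> \<le> card ?Z"
  proof (rule card_mono)
    show "finite ?Z" by (rule finite_subset[OF _ finite_pts]) auto
    show "\<psi> ` ?I \<subseteq> ?Z" by (auto simp: \<psi>_def pts_def)
  qed
  finally have "card ?I \<le> card ?Z" .
  then show ?thesis using card_Z[OF id, where 'a='a] by simp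
qed



definition G :: "'c set \<Rightarrow> nat \<Rightarrow> 'c set \<Rightarrow> ('c \<Rightarrow> nat \<Rightarrow> 'a::field) set" where
  "G \<Omega> d X = {f. f \<in> \<Omega> \<rightarrow>\<^sub>E pts (Suc d) \<and> bij_betw f \<Omega> (pts (Suc d)) \<and> transversal d (pts (Suc d) - f ` X)}"

definition mkL :: "'c set \<Rightarrow> nat \<Rightarrow> nat \<Rightarrow> (nat \<Rightarrow> 'c set) \<Rightarrow> ('c \<Rightarrow> nat \<Rightarrow> 'a::field) \<Rightarrow> ('c,'a) token list" where
  "mkL \<Omega> m d H f = Fmap f # map (\<lambda>k. Sub (proj_down d (pts (Suc d) - f ` H 0) ` f ` H k)) [1..<Suc m]"

lemma max_exec_iff: "max_exec \<Omega> m d H L \<longleftrightarrow> (\<exists>f\<in>G \<Omega> d (H 0). L = mkL \<Omega> m d H f)"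
  by (auto simp: max_exec_def G_def mkL_def)

lemma length_mkL[simp]: "length (mkL \<Omega> m d H f) = Suc m"
  by (simp add: mkL_def)

lemma hd_mkL[simp]: "hd (mkL \<Omega> m d H f) = Fmap f" "mkL \<Omega> m d H f ! 0 = Fmap f"
  by (simp_all add: mkL_def)

lemma Pi_nil: "Pi_prot \<Omega> m d H [] = Fmap ` G \<Omega> d (H 0)"
  by (auto simp: Pi_prot_def max_exec_iff mkL_def)

lemma exec_iff: "execution \<Omega> m d H \<rho> \<longleftrightarrow> (\<rho> = [] \<or> (\<exists>L L'. max_exec \<Omega> m d H L \<and> L = \<rho> @ L'))"
proof
  assume e: "execution \<Omega> m d H \<rho>"
  show "\<rho> = [] \<or> (\<exists>L L'. max_exec \<Omega> m d H L \<and> L = \<rho> @ L')"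
  proof (cases "\<rho> = []")
    case False
    let ?k = "length \<rho> - 1"
    have "?k < length \<rho>" using False by simp
    then have "\<rho> ! ?k \<in> Pi_prot \<Omega> m d H (take ?k \<rho>)" using e by (simp add: execution_def)
    moreover have "take ?k \<rho> @ [\<rho> ! ?k] = \<rho>"
      using False by (metis append_butlast_last_id butlast_conv_take last_conv_nth)
    moreover obtain L L' where LL: "max_exec \<Omega> m d H L" "L = take ?k \<rho> @ [\<rho> ! ?k] @ L'"
      using calculation(1) by (auto simp: Pi_prot_def)
    ultimately have "L = \<rho> @ L'" by (metis append.assoc)
    then show ?thesis using LL(1) by blast
  qed simp
next
  assume h: "\<rho> = [] \<or> (\<exists>L L'. max_exec \<Omega> m d H L \<and> L = \<rho> @ L')"
  show "execution \<Omega> m d H \<rho>"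
    unfolding execution_def
  proof (intro allI impI)
    fix k assume k: "k < length \<rho>"
    then obtain L L' where L: "max_exec \<Omega> m d H L" "L = \<rho> @ L'" using h by auto
    have "\<rho> = take k \<rho> @ [\<rho> ! k] @ drop (Suc k) \<rho>" using id_take_nth_drop[OF k] by simp
    then have "L = take k \<rho> @ [\<rho> ! k] @ (drop (Suc k) \<rho> @ L')" using L(2) by (metis append.assoc)
    then show "\<rho> ! k \<in> Pi_prot \<Omega> m d H (take k \<rho>)" using L(1) unfolding Pi_prot_def by blast
  qed
qed

lemma max_exec_hd:
  assumes "max_exec \<Omega> m d H L" "hd L = Fmap f"
  shows "f \<in> G \<Omega> d (H 0) \<and> L = mkL \<Omega> m d H f"
  using assms by (auto simp: max_exec_iff)

lemma Pi_single:
  assumes e: "execution \<Omega> m d H \<rho>" and k: "0 < k" "k < length \<rho>"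
  shows "Pi_prot \<Omega> m d H (take k \<rho>) = {\<rho> ! k}"
proof -
  have mem: "\<rho> ! k \<in> Pi_prot \<Omega> m d H (take k \<rho>)" using e k by (simp add: execution_def)
  have "a = \<rho> ! k" if a: "a \<in> Pi_prot \<Omega> m d H (take k \<rho>)" for a
  proof -
    obtain L1 L1' where L1: "max_exec \<Omega> m d H L1" "L1 = take k \<rho> @ [a] @ L1'"
      using a by (auto simp: Pi_prot_def)
    obtain L2 L2' where L2: "max_exec \<Omega> m d H L2" "L2 = take k \<rho> @ [\<rho> ! k] @ L2'"
      using mem by (auto simp: Pi_prot_def)
    obtain f where f: "hd L1 = Fmap f" using L1 max_exec_iff by (metis hd_mkL(1))
    have "take k \<rho> \<noteq> []" using k by (cases \<rho>) auto
    then have "hd L2 = hd L1" using L1(2) L2(2) by (simp add: hd_append)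
    then have "L1 = L2" using L1(1) L2(1) f max_exec_hd by metis
    then have "L1 ! k = L2 ! k" by simp
    then show ?thesis using L1(2) L2(2) k by (simp add: nth_append)
  qed
  then show ?thesis using mem by blast
qed

lemma run_weight_eq:
  fixes \<rho> :: "('c,'a::field) token list"
  shows "run_weight \<Omega> m d H \<rho> =
     (if execution \<Omega> m d H \<rho> then (if \<rho> = [] then 1 else 1 / real (card (G \<Omega> d (H 0) :: ('c \<Rightarrow> nat \<Rightarrow> 'a) set))) else 0)"
proof (cases "execution \<Omega> m d H \<rho>")
  case False
  then obtain k where k: "k < length \<rho>" "\<rho> ! k \<notin> Pi_prot \<Omega> m d H (take k \<rho>)"
    by (auto simp: execution_def)
  then show ?thesis using False unfolding run_weight_def
    by (intro trans[OF prod_zero]) (auto intro!: bexI[of _ k])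
next
  case True
  have "run_weight \<Omega> m d H \<rho> = (\<Prod>k<length \<rho>. if k = 0 then 1 / real (card (G \<Omega> d (H 0) :: ('c \<Rightarrow> nat \<Rightarrow> 'a) set)) else 1)"
    unfolding run_weight_def
  proof (rule prod.cong[OF refl])
    fix k assume "k \<in> {..<length \<rho>}"
    then have k: "k < length \<rho>" by simp
    then have mem: "\<rho> ! k \<in> Pi_prot \<Omega> m d H (take k \<rho>)" using True by (simp add: execution_def)
    show "(if \<rho> ! k \<in> Pi_prot \<Omega> m d H (take k \<rho>) then 1 / real (card (Pi_prot \<Omega> m d H (take k \<rho>))) else 0) =
          (if k = 0 then 1 / real (card (G \<Omega> d (H 0) :: ('c \<Rightarrow> nat \<Rightarrow> 'a) set)) else 1)"
    proof (cases "k = 0")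
      case True
      then show ?thesis using mem by (simp add: Pi_nil card_image inj_on_def)
    next
      case False
      then show ?thesis using mem Pi_single[OF \<open>execution \<Omega> m d H \<rho>\<close> _ k] by simp
    qed
  qed
  also have "\<dots> = (if \<rho> = [] then 1 else 1 / real (card (G \<Omega> d (H 0) :: ('c \<Rightarrow> nat \<Rightarrow> 'a) set)))"
  proof (cases "\<rho> = []")
    case False
    then have "{..<length \<rho>} = insert 0 {1..<length \<rho>}" by auto
    then show ?thesis using False by (simp add: prod.If_cases)
  qed simp
  finally show ?thesis using True by simp
qed



definition Phi :: "('c \<Rightarrow> 'c) \<Rightarrow> (nat \<Rightarrow> 'c set) \<Rightarrow> nat \<Rightarrow> 'c set" where
  "Phi \<sigma> H = (\<lambda>P. \<sigma> ` H P)"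

lemma deal_perm:
  assumes s: "bij_betw \<sigma> \<Omega> \<Omega>" and H: "is_deal \<Omega> m \<tau> H"
  shows "is_deal \<Omega> m \<tau> (Phi \<sigma> H)"
proof -
  have inj: "inj_on \<sigma> \<Omega>" and im: "\<sigma> ` \<Omega> = \<Omega>" using s by (auto simp: bij_betw_def)
  have sub: "H P \<subseteq> \<Omega>" if "P \<le> m" for P using H that by (simp add: is_deal_def)
  have "\<sigma> ` H P \<subseteq> \<Omega> \<and> card (\<sigma> ` H P) = \<tau> P" if "P \<le> m" for P
    using sub[OF that] H that inj im by (auto simp: is_deal_def card_image inj_on_subset)
  moreover have "\<sigma> ` H P \<inter> \<sigma> ` H Q = {}" if "P \<le> m" "Q \<le> m" "P \<noteq> Q" for P Q
  proof -
    have "\<sigma> ` H P \<inter> \<sigma> ` H Q = \<sigma> ` (H P \<inter> H Q)"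
      using inj sub that by (simp add: inj_on_image_Int)
    then show ?thesis using H that by (simp add: is_deal_def)
  qed
  moreover have "(\<Union>P\<le>m. \<sigma> ` H P) = \<Omega>"
  proof -
    have "(\<Union>P\<le>m. \<sigma> ` H P) = \<sigma> ` (\<Union>P\<le>m. H P)" by (simp add: image_UN)
    then show ?thesis using H im by (simp add: is_deal_def)
  qed
  moreover have "\<forall>P>m. \<sigma> ` H P = {}" using H by (simp add: is_deal_def)
  ultimately show ?thesis by (simp add: is_deal_def Phi_def)
qed

lemma G_perm_sub:
  assumes s: "bij_betw \<sigma> \<Omega> \<Omega>" and X: "X \<subseteq> \<Omega>" and g: "g \<in> G \<Omega> d (\<sigma> ` X)"
  shows "restrict (g \<circ> \<sigma>) \<Omega> \<in> G \<Omega> d X"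
proof -
  have gE: "g \<in> \<Omega> \<rightarrow>\<^sub>E pts (Suc d)" and gb: "bij_betw g \<Omega> (pts (Suc d))"
    and gt: "transversal d (pts (Suc d) - g ` \<sigma> ` X)" using g by (auto simp: G_def)
  have sm: "\<sigma> x \<in> \<Omega>" if "x \<in> \<Omega>" for x using s that by (auto simp: bij_betw_def)
  have "\<forall>x\<in>\<Omega>. (g \<circ> \<sigma>) x \<in> pts (Suc d)" using gE sm by (simp add: PiE_iff)
  then have "restrict (g \<circ> \<sigma>) \<Omega> \<in> \<Omega> \<rightarrow>\<^sub>E pts (Suc d)" by (simp only: restrict_PiE_iff)
  moreover have "bij_betw (restrict (g \<circ> \<sigma>) \<Omega>) \<Omega> (pts (Suc d))"
    using bij_betw_cong[of \<Omega> "restrict (g \<circ> \<sigma>) \<Omega>" "g \<circ> \<sigma>" "pts (Suc d)"] bij_betw_trans[OF s gb] by simp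
  moreover have "restrict (g \<circ> \<sigma>) \<Omega> ` X = g ` \<sigma> ` X" using X by (auto simp: image_iff) 
  ultimately show ?thesis using gt by (simp add: G_def)
qed

lemma G_perm_card:
  assumes s: "bij_betw \<sigma> \<Omega> \<Omega>" and X: "X \<subseteq> \<Omega>"
  shows "card (G \<Omega> d (\<sigma> ` X) :: ('c \<Rightarrow> nat \<Rightarrow> 'a::field) set) = card (G \<Omega> d X :: ('c \<Rightarrow> nat \<Rightarrow> 'a) set)"
proof -
  let ?s = "inv_into \<Omega> \<sigma>"
  have s': "bij_betw ?s \<Omega> \<Omega>" using s by (rule bij_betw_inv_into)
  have inj: "inj_on \<sigma> \<Omega>" using s by (simp add: bij_betw_def)
  have X': "?s ` \<sigma> ` X = X" using inj X by simp
  have sX: "\<sigma> ` X \<subseteq> \<Omega>" using s X by (auto simp: bij_betw_def)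
  have sm: "\<sigma> x \<in> \<Omega>" if "x \<in> \<Omega>" for x using s that by (auto simp: bij_betw_def)
  have sm': "?s x \<in> \<Omega>" if "x \<in> \<Omega>" for x using s' that by (auto simp: bij_betw_def)
  have c1: "\<sigma> (?s x) = x" if "x \<in> \<Omega>" for x using s that by (simp add: bij_betw_def f_inv_into_f)
  have c2: "?s (\<sigma> x) = x" if "x \<in> \<Omega>" for x using inj that by simp
  have "bij_betw (\<lambda>g. restrict (g \<circ> \<sigma>) \<Omega>) (G \<Omega> d (\<sigma> ` X) :: ('c \<Rightarrow> nat \<Rightarrow> 'a) set) (G \<Omega> d X)"
  proof (rule bij_betw_byWitness[where f'="\<lambda>g. restrict (g \<circ> ?s) \<Omega>"])
    show "\<forall>a\<in>G \<Omega> d (\<sigma> ` X). restrict (restrict (a \<circ> \<sigma>) \<Omega> \<circ> ?s) \<Omega> = (a :: 'c \<Rightarrow> nat \<Rightarrow> 'a)"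
    proof
      fix a :: "'c \<Rightarrow> nat \<Rightarrow> 'a" assume "a \<in> G \<Omega> d (\<sigma> ` X)"
      then have "a \<in> extensional \<Omega>" by (auto simp: G_def PiE_def)
      then show "restrict (restrict (a \<circ> \<sigma>) \<Omega> \<circ> ?s) \<Omega> = a"
        by (auto simp: fun_eq_iff sm' c1 extensional_def)
    qed
    show "\<forall>a\<in>G \<Omega> d X. restrict (restrict (a \<circ> ?s) \<Omega> \<circ> \<sigma>) \<Omega> = (a :: 'c \<Rightarrow> nat \<Rightarrow> 'a)"
    proof
      fix a :: "'c \<Rightarrow> nat \<Rightarrow> 'a" assume "a \<in> G \<Omega> d X"
      then have "a \<in> extensional \<Omega>" by (auto simp: G_def PiE_def)
      then show "restrict (restrict (a \<circ> ?s) \<Omega> \<circ> \<sigma>) \<Omega> = a"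
        by (auto simp: fun_eq_iff sm c2 extensional_def)
    qed
    show "(\<lambda>g. restrict (g \<circ> \<sigma>) \<Omega>) ` (G \<Omega> d (\<sigma> ` X) :: ('c \<Rightarrow> nat \<Rightarrow> 'a) set) \<subseteq> G \<Omega> d X"
      using G_perm_sub[OF s X] by blast
    show "(\<lambda>g. restrict (g \<circ> ?s) \<Omega>) ` (G \<Omega> d X :: ('c \<Rightarrow> nat \<Rightarrow> 'a) set) \<subseteq> G \<Omega> d (\<sigma> ` X)"
      using G_perm_sub[OF s' sX] X' by auto
  qed
  then show ?thesis by (rule bij_betw_same_card)
qed

lemma geo_sigma:
  fixes f0 :: "'c \<Rightarrow> nat \<Rightarrow> 'a::field" and u :: "nat \<Rightarrow> 'a" and s :: 'a
  assumes f0: "bij_betw f0 \<Omega> (pts (Suc d))"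
  defines "\<sigma> \<equiv> \<lambda>x. inv_into \<Omega> f0 (shear d u s (f0 x))"
  shows "bij_betw \<sigma> \<Omega> \<Omega>" "\<And>x. x \<in> \<Omega> \<Longrightarrow> f0 (\<sigma> x) = shear d u s (f0 x)"
proof -
  have "bij_betw (inv_into \<Omega> f0 \<circ> (shear d u s \<circ> f0)) \<Omega> \<Omega>"
    by (rule bij_betw_trans[OF bij_betw_trans[OF f0 shear_bij] bij_betw_inv_into[OF f0]])
  then show "bij_betw \<sigma> \<Omega> \<Omega>" by (simp add: \<sigma>_def comp_def)
  fix x assume "x \<in> \<Omega>"
  then have "f0 x \<in> pts (Suc d)" using f0 by (auto simp: bij_betw_def)
  then have "shear d u s (f0 x) \<in> f0 ` \<Omega>" using f0 shear_pts by (auto simp: bij_betw_def)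
  then show "f0 (\<sigma> x) = shear d u s (f0 x)" by (simp add: \<sigma>_def f_inv_into_f)
qed

lemma mkL_perm:
  fixes f0 :: "'c \<Rightarrow> nat \<Rightarrow> 'a::field"
  assumes f0: "f0 \<in> G \<Omega> d (H 0)" and HS: "\<And>P. H P \<subseteq> \<Omega>" and u: "u \<in> pts d"
    and sig: "\<And>x. x \<in> \<Omega> \<Longrightarrow> f0 (\<sigma> x) = shear d u s (f0 x)"
  shows "f0 \<in> G \<Omega> d (\<sigma> ` H 0) \<and> mkL \<Omega> m d (Phi \<sigma> H) f0 = mkL \<Omega> m d H f0"
proof -
  have fb: "bij_betw f0 \<Omega> (pts (Suc d))" and ft: "transversal d (pts (Suc d) - f0 ` H 0)"
    using f0 by (auto simp: G_def)
  have img: "f0 ` \<sigma> ` A = shear d u s ` f0 ` A" if "A \<subseteq> \<Omega>" for A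
    using that sig by (auto simp: image_iff) (metis subsetD)+
  obtain a b where a: "a \<in> pts d" and V: "pts (Suc d) - f0 ` H 0 = hyperplane d a b"
    using ft by (auto simp: transversal_def)
  have f0H: "f0 ` H 0 \<subseteq> pts (Suc d)" using fb HS by (auto simp: bij_betw_def)
  have "pts (Suc d) - f0 ` \<sigma> ` H 0 = shear d u s ` (pts (Suc d) - f0 ` H 0)"
  proof -
    have inj: "inj_on (shear d u s) (pts (Suc d))" and im: "shear d u s ` pts (Suc d) = pts (Suc d)"
      using shear_bij[of d u s] by (simp_all add: bij_betw_def)
    have "shear d u s ` (pts (Suc d) - f0 ` H 0) = shear d u s ` pts (Suc d) - shear d u s ` f0 ` H 0"
      using inj f0H by (intro inj_on_image_set_diff) auto
    then show ?thesis using im img[OF HS] by simp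
  qed
  then have V': "pts (Suc d) - f0 ` \<sigma> ` H 0 = shear d u s ` hyperplane d a b" using V by simp
  have "(\<lambda>i. a i - u i) \<in> pts d" using a u by (simp add: pts_def)
  then have "transversal d (pts (Suc d) - f0 ` \<sigma> ` H 0)"
    unfolding V' shear_hyp transversal_def by blast
  then have G1: "f0 \<in> G \<Omega> d (\<sigma> ` H 0)" using f0 by (simp add: G_def)
  have "proj_down d (pts (Suc d) - f0 ` \<sigma> ` H 0) ` f0 ` \<sigma> ` H k = proj_down d (pts (Suc d) - f0 ` H 0) ` f0 ` H k" for k
  proof -
    have "proj_down d (pts (Suc d) - f0 ` \<sigma> ` H 0) ` f0 ` \<sigma> ` H k
        = (\<lambda>w. proj_down d (shear d u s ` hyperplane d a b) (shear d u s w)) ` f0 ` H k"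
    proof -
      have "proj_down d (pts (Suc d) - f0 ` \<sigma> ` H 0) ` f0 ` \<sigma> ` H k
          = proj_down d (shear d u s ` hyperplane d a b) ` shear d u s ` f0 ` H k"
        using V' img[OF HS] by (simp only:)
      then show ?thesis by (simp only: image_image)
    qed
    also have "\<dots> = proj_down d (hyperplane d a b) ` f0 ` H k"
      using proj_down_shear[OF a u] by simp
    finally show ?thesis using V by simp
  qed
  then have "mkL \<Omega> m d (Phi \<sigma> H) f0 = mkL \<Omega> m d H f0" by (simp add: mkL_def Phi_def)
  then show ?thesis using G1 by simp
qed

lemma exec_perm:
  fixes \<rho> :: "('c, 'a::field) token list"
  assumes e: "execution \<Omega> m d H \<rho>" and r: "\<rho> \<noteq> []" "\<rho> ! 0 = Fmap f0" and HS: "\<And>P. H P \<subseteq> \<Omega>"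
    and u: "u \<in> pts d" and sig: "\<And>x. x \<in> \<Omega> \<Longrightarrow> f0 (\<sigma> x) = shear d u s (f0 x)"
  shows "execution \<Omega> m d (Phi \<sigma> H) \<rho>"
proof -
  obtain L L' where L: "max_exec \<Omega> m d H L" "L = \<rho> @ L'" using e r by (auto simp: exec_iff)
  have "hd L = Fmap f0" using L(2) r by (cases \<rho>) auto
  then have f: "f0 \<in> G \<Omega> d (H 0)" "L = mkL \<Omega> m d H f0" using max_exec_hd L(1) by blast+
  have m1: "f0 \<in> G \<Omega> d (Phi \<sigma> H 0) \<and> L = mkL \<Omega> m d (Phi \<sigma> H) f0"
    using mkL_perm[where \<sigma>=\<sigma> and s=s and u=u and H=H and \<Omega>=\<Omega> and d=d and m=m, OF f(1) HS u sig] f(2) by (simp add: Phi_def)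
  then have "max_exec \<Omega> m d (Phi \<sigma> H) L" unfolding max_exec_iff by blast
  then show ?thesis using L(2) by (auto simp: exec_iff)
qed



lemma deal_sub: "is_deal \<Omega> m \<tau> H \<Longrightarrow> H P \<subseteq> \<Omega>"
  by (cases "P \<le> m") (auto simp: is_deal_def)

lemma finite_deals:
  assumes "finite \<Omega>"
  shows "finite {H. is_deal \<Omega> m \<tau> H}"
proof (rule finite_subset)
  show "{H. is_deal \<Omega> m \<tau> H} \<subseteq> (\<lambda>g P. if P \<le> m then g P else {}) ` ({..m} \<rightarrow>\<^sub>E Pow \<Omega>)"
  proof
    fix H assume H: "H \<in> {H. is_deal \<Omega> m \<tau> H}"
    have "H = (\<lambda>P. if P \<le> m then restrict H {..m} P else {})"
      using H by (auto simp: is_deal_def fun_eq_iff)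
    moreover have "restrict H {..m} \<in> {..m} \<rightarrow>\<^sub>E Pow \<Omega>"
      using H by (auto simp: is_deal_def)
    ultimately show "H \<in> (\<lambda>g P. if P \<le> m then g P else {}) ` ({..m} \<rightarrow>\<^sub>E Pow \<Omega>)" by blast
  qed
  show "finite ((\<lambda>g P. if P \<le> m then g P else {}) ` ({..m} \<rightarrow>\<^sub>E Pow \<Omega>))"
    using assms by (intro finite_imageI finite_PiE) auto
qed

lemma finite_G:
  assumes "finite \<Omega>"
  shows "finite (G \<Omega> d X :: ('c \<Rightarrow> nat \<Rightarrow> 'a::{finite,field}) set)"
  by (rule finite_subset[OF _ finite_PiE[OF assms, of "\<lambda>_. pts (Suc d)"]]) (auto simp: G_def finite_pts)

lemma hyp_zero: "hyperplane d (\<lambda>_. 0) 0 = (pts d :: (nat \<Rightarrow> 'a::field) set)"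
  by (auto simp: hyp_mem dot_def pts_def) (metis Suc_leI le_neq_implies_less)

lemma G_nonempty:
  assumes fin: "finite \<Omega>" and cO: "card \<Omega> = CARD('a) ^ (d + 1)" and X: "X \<subseteq> \<Omega>"
    and cX: "card X = CARD('a) ^ (d + 1) - CARD('a) ^ d"
  shows "(G \<Omega> d X :: ('c \<Rightarrow> nat \<Rightarrow> 'a::{finite,field}) set) \<noteq> {}"
proof -
  let ?W = "pts (Suc d) - pts d :: (nat \<Rightarrow> 'a) set"
  let ?V = "pts d :: (nat \<Rightarrow> 'a) set"
  have sub: "?V \<subseteq> pts (Suc d)" by (auto simp: pts_def)
  have le: "CARD('a) ^ d \<le> CARD('a) ^ (d + 1)" by (simp add: power_increasing)
  have cW: "card ?W = CARD('a) ^ (d + 1) - CARD('a) ^ d"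
    using sub by (simp add: card_Diff_subset finite_pts card_pts)
  have cR: "card (\<Omega> - X) = CARD('a) ^ d"
    using X fin cO cX le by (simp add: card_Diff_subset finite_subset)
  have fX: "finite X" using X fin by (rule finite_subset)
  have fW: "finite ?W" using finite_pts[of "Suc d", where 'a='a] by blast
  have fV: "finite ?V" using finite_pts[of d, where 'a='a] by blast
  obtain h1 where h1: "bij_betw h1 X ?W"
    using finite_same_card_bij[OF fX fW] cW cX by auto
  obtain h2 where h2: "bij_betw h2 (\<Omega> - X) ?V"
    using finite_same_card_bij[OF _ fV, of "\<Omega> - X"] cR fin card_pts[of d, where 'a='a] by auto
  define f where "f = restrict (\<lambda>x. if x \<in> X then h1 x else h2 x) \<Omega>"
  have b1: "bij_betw f X ?W" using h1 X by (subst bij_betw_cong[of _ _ h1]) (auto simp: f_def)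
  have b2: "bij_betw f (\<Omega> - X) ?V" using h2 by (subst bij_betw_cong[of _ _ h2]) (auto simp: f_def)
  have "bij_betw f (X \<union> (\<Omega> - X)) (?W \<union> ?V)" by (rule bij_betw_combine[OF b1 b2]) auto
  moreover have "X \<union> (\<Omega> - X) = \<Omega>" "?W \<union> ?V = pts (Suc d)" using X sub by auto
  ultimately have fb: "bij_betw f \<Omega> (pts (Suc d))" by simp
  have "f \<in> \<Omega> \<rightarrow>\<^sub>E pts (Suc d)"
  proof -
    have "\<forall>x\<in>\<Omega>. f x \<in> pts (Suc d)" using fb by (auto simp: bij_betw_def)
    moreover have "f \<in> extensional \<Omega>" by (simp add: f_def)
    ultimately show ?thesis by (simp add: PiE_iff)
  qed
  moreover have "f ` X = ?W" using b1 by (simp add: bij_betw_def)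
  then have "pts (Suc d) - f ` X = hyperplane d (\<lambda>_. 0) 0" using sub by (auto simp: hyp_zero)
  then have "transversal d (pts (Suc d) - f ` X)" unfolding transversal_def by (auto simp: pts_def)
  ultimately have "f \<in> G \<Omega> d X" using fb by (simp add: G_def)
  then show ?thesis by blast
qed

lemma terminal_full:
  assumes t: "terminal \<Omega> m d H \<rho>" and ne: "\<rho> \<noteq> []"
  shows "max_exec \<Omega> m d H \<rho>"
proof -
  obtain L L' where L: "max_exec \<Omega> m d H L" "L = \<rho> @ L'"
    using t ne by (auto simp: terminal_def exec_iff)
  have "L' = []"
  proof (rule ccontr)
    assume "L' \<noteq> []"
    then have "L = \<rho> @ [hd L'] @ tl L'" using L(2) by simp
    then have "hd L' \<in> Pi_prot \<Omega> m d H \<rho>" using L(1) by (auto simp: Pi_prot_def)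
    then show False using t by (simp add: terminal_def)
  qed
  then show ?thesis using L by simp
qed

lemma exec_full:
  assumes e: "execution \<Omega> m d H \<rho>" and ne: "\<rho> \<noteq> []" and len: "length \<rho> = Suc m"
  shows "max_exec \<Omega> m d H \<rho>"
proof -
  obtain L L' where L: "max_exec \<Omega> m d H L" "L = \<rho> @ L'"
    using e ne by (auto simp: exec_iff)
  have "length L = Suc m" using L(1) by (auto simp: max_exec_iff)
  then have "L' = []" using L(2) len by simp
  then show ?thesis using L by simp
qed

lemma informative_core:
  fixes \<rho> :: "('c, 'a::{finite,field}) token list"
  assumes fin: "finite \<Omega>" and cO: "card \<Omega> = CARD('a) ^ (d + 1)"
    and t0: "\<tau> 0 = CARD('a) ^ (d + 1) - CARD('a) ^ d"
    and tk: "\<forall>k\<in>{1..m}. \<tau> k > CARD('a) ^ (d - 1)"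
    and H: "is_deal \<Omega> m \<tau> H" and t: "terminal \<Omega> m d H \<rho>" and P: "P \<le> m"
    and H': "is_deal \<Omega> m \<tau> H'" and e': "execution \<Omega> m d H' \<rho>" and eqP: "H' P = H P"
  shows "H' = H"
proof (cases "\<rho> = []")
  case True
  then have "Pi_prot \<Omega> m d H ([] :: ('c, 'a) token list) = {}" using t by (simp add: terminal_def)
  then have "(G \<Omega> d (H 0) :: ('c \<Rightarrow> nat \<Rightarrow> 'a) set) = {}" by (simp add: Pi_nil)
  moreover have "(G \<Omega> d (H 0) :: ('c \<Rightarrow> nat \<Rightarrow> 'a) set) \<noteq> {}"
    using G_nonempty[OF fin cO deal_sub[OF H] ] H t0 by (auto simp: is_deal_def)
  ultimately show ?thesis by blast
next
  case False
  have m1: "max_exec \<Omega> m d H \<rho>" by (rule terminal_full[OF t False])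
  then obtain f where f: "f \<in> G \<Omega> d (H 0)" "\<rho> = mkL \<Omega> m d H f" by (auto simp: max_exec_iff)
  have "length \<rho> = Suc m" using f by simp
  then have m2: "max_exec \<Omega> m d H' \<rho>" using exec_full[OF e' False] by simp
  then obtain f' where f': "f' \<in> G \<Omega> d (H' 0)" "\<rho> = mkL \<Omega> m d H' f'" by (auto simp: max_exec_iff)
  have "f' = f" using f(2) f'(2) by (simp add: mkL_def)
  with f' have f2: "f \<in> G \<Omega> d (H' 0)" "\<rho> = mkL \<Omega> m d H' f" by auto
  define V where "V = pts (Suc d) - f ` H 0"
  define V' where "V' = pts (Suc d) - f ` H' 0"
  have fb: "bij_betw f \<Omega> (pts (Suc d))" using f by (simp add: G_def)
  have finj: "inj_on f \<Omega>" and fim: "f ` \<Omega> = pts (Suc d)" using fb by (auto simp: bij_betw_def)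
  have sub: "H k \<subseteq> \<Omega>" "H' k \<subseteq> \<Omega>" for k using H H' by (simp_all add: deal_sub)
  have inV: "f ` H k \<subseteq> V" if "1 \<le> k" "k \<le> m" for k
  proof -
    have "H k \<inter> H 0 = {}" using H that by (simp add: is_deal_def)
    then have "f ` H k \<inter> f ` H 0 = {}" using finj sub by (metis image_empty inj_on_image_Int)
    moreover have "f ` H k \<subseteq> pts (Suc d)" using fim sub by blast
    ultimately show ?thesis by (auto simp: V_def)
  qed
  have inV': "f ` H' k \<subseteq> V'" if "1 \<le> k" "k \<le> m" for k
  proof -
    have "H' k \<inter> H' 0 = {}" using H' that by (simp add: is_deal_def)
    then have "f ` H' k \<inter> f ` H' 0 = {}" using finj sub by (metis image_empty inj_on_image_Int)
    moreover have "f ` H' k \<subseteq> pts (Suc d)" using fim sub by blast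
    ultimately show ?thesis by (auto simp: V'_def)
  qed
  obtain a b where a: "a \<in> pts d" and Va: "V = hyperplane d a b" using f by (auto simp: G_def transversal_def V_def)
  obtain a' b' where a': "a' \<in> pts d" and Va': "V' = hyperplane d a' b'" using f2 by (auto simp: G_def transversal_def V'_def)
  have VV: "V' = V"
  proof (cases "P = 0")
    case True then show ?thesis using eqP by (simp add: V_def V'_def)
  next
    case False
    show ?thesis
    proof (rule ccontr)
      assume ne: "V' \<noteq> V"
      have "f ` H P \<subseteq> V \<inter> V'" using inV inV' eqP False P by (metis Int_subset_iff less_one not_less)
      then have "card (f ` H P) \<le> card (V \<inter> V')"
        by (intro card_mono) (simp_all add: Va finite_hyp)
      also have "\<dots> \<le> CARD('a) ^ (d - 1)" using hyp_inter_card[OF a a'] ne Va Va' by simp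
      finally have "card (H P) \<le> CARD('a) ^ (d - 1)" using finj sub by (simp add: card_image inj_on_subset)
      moreover have "card (H P) = \<tau> P" using H P by (simp add: is_deal_def)
      moreover have "P \<in> {1..m}" using P False by simp
      ultimately show False using tk by fastforce
    qed
  qed
  have lists: "map (\<lambda>k. Sub (proj_down d V ` f ` H k)) [1..<Suc m] = map (\<lambda>k. Sub (proj_down d V ` f ` H' k)) [1..<Suc m]"
    using f(2) f2(2) VV by (simp add: mkL_def V_def V'_def)
  have "H k = H' k" for k
  proof -
    consider "k = 0" | "1 \<le> k" "k \<le> m" | "k > m" by linarith
    then show ?thesis
    proof cases
      case 1
      have "f ` H 0 \<subseteq> pts (Suc d)" "f ` H' 0 \<subseteq> pts (Suc d)" using fim sub by blast+
      then have "f ` H 0 = pts (Suc d) - V" "f ` H' 0 = pts (Suc d) - V'" by (auto simp: V_def V'_def)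
      then have "f ` H 0 = f ` H' 0" using VV by simp
      then show ?thesis using 1 finj sub by (simp add: inj_on_image_eq_iff)
    next
      case 2
      then have "proj_down d V ` f ` H k = proj_down d V ` f ` H' k"
      proof -
        have "k \<in> set [1..<Suc m]" using 2 by auto
        from bspec[OF map_eq_conv[THEN iffD1, OF lists] this] show ?thesis by simp
      qed
      moreover have "inj_on (proj_down d V) V" using Va a pd_inj by simp
      ultimately have "f ` H k = f ` H' k"
        using inV[OF 2] inV'[OF 2] VV by (simp add: inj_on_image_eq_iff)
      then show ?thesis using finj sub by (simp add: inj_on_image_eq_iff)
    next
      case 3
      then show ?thesis using H H' by (simp add: is_deal_def)
    qed
  qed
  then show ?thesis by auto
qed



definition wt :: "'c set \<Rightarrow> nat \<Rightarrow> ('c, 'a::field) token list \<Rightarrow> (nat \<Rightarrow> 'c set) \<Rightarrow> real" where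
  "wt \<Omega> d \<rho> H = (if \<rho> = [] then 1 else 1 / real (card (G \<Omega> d (H 0) :: ('c \<Rightarrow> nat \<Rightarrow> 'a) set)))"

lemma run_weight_wt: "run_weight \<Omega> m d H \<rho> = (if execution \<Omega> m d H \<rho> then wt \<Omega> d \<rho> H else 0)"
  by (simp add: run_weight_eq wt_def)

lemma wt_nonneg: "wt \<Omega> d \<rho> H \<ge> 0"
  by (simp add: wt_def)

lemma wt_perm: "bij_betw \<sigma> \<Omega> \<Omega> \<Longrightarrow> H 0 \<subseteq> \<Omega> \<Longrightarrow> wt \<Omega> d \<rho> (Phi \<sigma> H) = wt \<Omega> d \<rho> H"
  unfolding wt_def Phi_def by (simp add: G_perm_card)

lemma sym_exists:
  fixes \<rho> :: "('c, 'a::{finite,field}) token list"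
  assumes run: "is_run \<Omega> m \<tau> d \<rho>" and c: "c \<in> \<Omega>" "c' \<in> \<Omega>"
  shows "\<exists>\<sigma>. bij_betw \<sigma> \<Omega> \<Omega> \<and> \<sigma> c = c' \<and>
     (\<forall>H. is_deal \<Omega> m \<tau> H \<and> execution \<Omega> m d H \<rho> \<longrightarrow> execution \<Omega> m d (Phi \<sigma> H) \<rho>)"
proof (cases "\<rho> = []")
  case True
  define \<sigma> where "\<sigma> = (\<lambda>x. if x = c then c' else if x = c' then c else x)"
  have "bij_betw \<sigma> \<Omega> \<Omega>"
    by (rule bij_betw_byWitness[where f'=\<sigma>]) (use c in \<open>auto simp: \<sigma>_def\<close>)
  moreover have "\<sigma> c = c'" by (simp add: \<sigma>_def)
  ultimately show ?thesis using True by (auto simp: exec_iff)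
next
  case False
  obtain H0 where H0: "is_deal \<Omega> m \<tau> H0" "execution \<Omega> m d H0 \<rho>" using run by (auto simp: is_run_def)
  then have "\<rho> ! 0 \<in> Pi_prot \<Omega> m d H0 (take 0 \<rho>)" using False unfolding execution_def by (metis length_greater_0_conv)
  then obtain f0 :: "'c \<Rightarrow> nat \<Rightarrow> 'a" where f0: "f0 \<in> G \<Omega> d (H0 0)" "\<rho> ! 0 = Fmap f0" by (auto simp: Pi_nil)
  have fb: "bij_betw f0 \<Omega> (pts (Suc d))" using f0 by (simp add: G_def)
  have "f0 c \<in> pts (Suc d)" "f0 c' \<in> pts (Suc d)" using fb c by (auto simp: bij_betw_def)
  then obtain u s where u: "u \<in> pts d" and us: "shear d u s (f0 c) = f0 c'" using shear_trans by blast
  define \<sigma> where "\<sigma> = (\<lambda>x. inv_into \<Omega> f0 (shear d u s (f0 x)))"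
  have sb: "bij_betw \<sigma> \<Omega> \<Omega>" and sig: "\<And>x. x \<in> \<Omega> \<Longrightarrow> f0 (\<sigma> x) = shear d u s (f0 x)"
    using geo_sigma[OF fb, where u=u and s=s] by (simp_all add: \<sigma>_def)
  have "\<sigma> c \<in> \<Omega>" using sb c by (auto simp: bij_betw_def)
  moreover have "f0 (\<sigma> c) = f0 c'" using sig[OF c(1)] us by simp
  ultimately have sc: "\<sigma> c = c'" using fb c by (auto simp: bij_betw_def inj_on_def)
  have "execution \<Omega> m d (Phi \<sigma> H) \<rho>" if "is_deal \<Omega> m \<tau> H" "execution \<Omega> m d H \<rho>" for H
    by (rule exec_perm[OF that(2) False f0(2) deal_sub[OF that(1)] u sig])
  then show ?thesis using sb sc by blast
qed

lemma phi_inj: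
  assumes "bij_betw \<sigma> \<Omega> \<Omega>"
  shows "inj_on (Phi \<sigma>) {H. is_deal \<Omega> m \<tau> H}"
proof (rule inj_onI)
  fix H1 H2 assume h: "H1 \<in> {H. is_deal \<Omega> m \<tau> H}" "H2 \<in> {H. is_deal \<Omega> m \<tau> H}" "Phi \<sigma> H1 = Phi \<sigma> H2"
  have inj: "inj_on \<sigma> \<Omega>" using assms by (simp add: bij_betw_def)
  show "H1 = H2"
  proof
    fix P
    have "\<sigma> ` H1 P = \<sigma> ` H2 P" using h(3) by (simp add: Phi_def fun_eq_iff)
    moreover have "H1 P \<subseteq> \<Omega>" "H2 P \<subseteq> \<Omega>" using deal_sub[of \<Omega> m \<tau> H1 P] deal_sub[of \<Omega> m \<tau> H2 P] h(1,2) by auto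
    ultimately show "H1 P = H2 P" using inj by (simp add: inj_on_image_eq_iff)
  qed
qed

lemma T_le:
  fixes \<rho> :: "('c, 'a::{finite,field}) token list"
  assumes fin: "finite \<Omega>" and run: "is_run \<Omega> m \<tau> d \<rho>" and c: "c \<in> \<Omega>" "c' \<in> \<Omega>"
  shows "(\<Sum>H\<in>{H. is_deal \<Omega> m \<tau> H \<and> execution \<Omega> m d H \<rho> \<and> c \<in> H P}. wt \<Omega> d \<rho> H)
       \<le> (\<Sum>H\<in>{H. is_deal \<Omega> m \<tau> H \<and> execution \<Omega> m d H \<rho> \<and> c' \<in> H P}. wt \<Omega> d \<rho> H)"
proof -
  obtain \<sigma> where sb: "bij_betw \<sigma> \<Omega> \<Omega>" and sc: "\<sigma> c = c'"
    and ex: "\<And>H. is_deal \<Omega> m \<tau> H \<Longrightarrow> execution \<Omega> m d H \<rho> \<Longrightarrow> execution \<Omega> m d (Phi \<sigma> H) \<rho>"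
    using sym_exists[OF run c] by blast
  let ?A = "{H. is_deal \<Omega> m \<tau> H \<and> execution \<Omega> m d H \<rho> \<and> c \<in> H P}"
  let ?B = "{H. is_deal \<Omega> m \<tau> H \<and> execution \<Omega> m d H \<rho> \<and> c' \<in> H P}"
  have injA: "inj_on (Phi \<sigma>) ?A" by (rule inj_on_subset[OF phi_inj[OF sb]]) auto
  have sub: "Phi \<sigma> ` ?A \<subseteq> ?B"
  proof
    fix H' assume "H' \<in> Phi \<sigma> ` ?A"
    then obtain H where H: "H \<in> ?A" "H' = Phi \<sigma> H" by blast
    then have "is_deal \<Omega> m \<tau> H'" using deal_perm[OF sb] by auto
    moreover have "execution \<Omega> m d H' \<rho>" using H ex by auto
    moreover have "c' \<in> H' P" using H sc by (auto simp: Phi_def)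
    ultimately show "H' \<in> ?B" by simp
  qed
  have finB: "finite ?B" by (rule finite_subset[OF _ finite_deals[OF fin]]) auto
  have "(\<Sum>H\<in>?A. wt \<Omega> d \<rho> H) = (\<Sum>H\<in>?A. wt \<Omega> d \<rho> (Phi \<sigma> H))"
    by (rule sum.cong) (auto simp: wt_perm[OF sb] deal_sub)
  also have "\<dots> = (\<Sum>H\<in>Phi \<sigma> ` ?A. wt \<Omega> d \<rho> H)" by (simp add: sum.reindex[OF injA])
  also have "\<dots> \<le> (\<Sum>H\<in>?B. wt \<Omega> d \<rho> H)" by (rule sum_mono2[OF finB sub]) (simp add: wt_nonneg)
  finally show ?thesis .
qed

lemma prob_and_run_eq:
  fixes \<rho> :: "('c, 'a::field) token list"
  assumes fin: "finite \<Omega>"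
  shows "prob_and_run \<Omega> m \<tau> d E \<rho> =
    (\<Sum>H\<in>{H. is_deal \<Omega> m \<tau> H \<and> execution \<Omega> m d H \<rho> \<and> E H}. wt \<Omega> d \<rho> H) / real (card {H. is_deal \<Omega> m \<tau> H})"
proof -
  have fD: "finite {H. is_deal \<Omega> m \<tau> H \<and> E H}"
    by (rule finite_subset[OF _ finite_deals[OF fin]]) auto
  have "(\<Sum>H\<in>{H. is_deal \<Omega> m \<tau> H \<and> E H}. run_weight \<Omega> m d H \<rho>)
      = (\<Sum>H\<in>{H. is_deal \<Omega> m \<tau> H \<and> E H}. if execution \<Omega> m d H \<rho> then wt \<Omega> d \<rho> H else 0)"
    by (simp add: run_weight_wt)
  also have "\<dots> = (\<Sum>H\<in>{H \<in> {H. is_deal \<Omega> m \<tau> H \<and> E H}. execution \<Omega> m d H \<rho>}. wt \<Omega> d \<rho> H)"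
    by (rule sum.inter_filter[symmetric, OF fD])
  also have "{H \<in> {H. is_deal \<Omega> m \<tau> H \<and> E H}. execution \<Omega> m d H \<rho>} = {H. is_deal \<Omega> m \<tau> H \<and> execution \<Omega> m d H \<rho> \<and> E H}"
    by auto
  finally show ?thesis by (simp add: prob_and_run_def)
qed

lemma safe_core:
  fixes \<rho> :: "('c, 'a::{finite,field}) token list"
  assumes fin: "finite \<Omega>" and cO: "card \<Omega> = (\<Sum>Q\<le>m. \<tau> Q)"
    and run: "is_run \<Omega> m \<tau> d \<rho>" and c: "c \<in> \<Omega>" and P: "P \<le> m"
  shows "cond_prob \<Omega> m \<tau> d (\<lambda>H. c \<in> H P) \<rho> = real (\<tau> P) / real (\<Sum>Q\<le>m. \<tau> Q)"
proof -
  define T where "T c = (\<Sum>H\<in>{H. is_deal \<Omega> m \<tau> H \<and> execution \<Omega> m d H \<rho> \<and> c \<in> H P}. wt \<Omega> d \<rho> H)" for c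
  define S where "S = {H. is_deal \<Omega> m \<tau> H \<and> execution \<Omega> m d H \<rho>}"
  define Tot where "Tot = (\<Sum>H\<in>S. wt \<Omega> d \<rho> H)"
  have fS: "finite S" unfolding S_def by (rule finite_subset[OF _ finite_deals[OF fin]]) auto
  have Teq: "T c1 = T c2" if "c1 \<in> \<Omega>" "c2 \<in> \<Omega>" for c1 c2
    using T_le[OF fin run that, of P] T_le[OF fin run that(2,1), of P] unfolding T_def by linarith
  have "(\<Sum>c'\<in>\<Omega>. T c') = (\<Sum>c'\<in>\<Omega>. \<Sum>H\<in>S. if c' \<in> H P then wt \<Omega> d \<rho> H else 0)"
  proof (rule sum.cong[OF refl])
    fix c' assume "c' \<in> \<Omega>"
    have "T c' = (\<Sum>H\<in>{H \<in> S. c' \<in> H P}. wt \<Omega> d \<rho> H)"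
      unfolding T_def S_def by (rule sum.cong) auto
    also have "\<dots> = (\<Sum>H\<in>S. if c' \<in> H P then wt \<Omega> d \<rho> H else 0)"
      by (rule sum.inter_filter[OF fS])
    finally show "T c' = (\<Sum>H\<in>S. if c' \<in> H P then wt \<Omega> d \<rho> H else 0)" .
  qed
  also have "\<dots> = (\<Sum>H\<in>S. \<Sum>c'\<in>\<Omega>. if c' \<in> H P then wt \<Omega> d \<rho> H else 0)"
    by (rule sum.swap)
  also have "\<dots> = (\<Sum>H\<in>S. wt \<Omega> d \<rho> H * real (\<tau> P))"
  proof (rule sum.cong[OF refl])
    fix H assume H: "H \<in> S"
    then have hd: "is_deal \<Omega> m \<tau> H" by (simp add: S_def)
    have "(\<Sum>c'\<in>\<Omega>. if c' \<in> H P then wt \<Omega> d \<rho> H else 0) = (\<Sum>c'\<in>{c' \<in> \<Omega>. c' \<in> H P}. wt \<Omega> d \<rho> H)"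
      by (rule sum.inter_filter[symmetric, OF fin])
    also have "{c' \<in> \<Omega>. c' \<in> H P} = H P" using deal_sub[OF hd, of P] by auto
    finally have e: "(\<Sum>c'\<in>\<Omega>. if c' \<in> H P then wt \<Omega> d \<rho> H else 0) = (\<Sum>c'\<in>H P. wt \<Omega> d \<rho> H)" .
    have "card (H P) = \<tau> P" using hd P by (simp add: is_deal_def)
    then show "(\<Sum>c'\<in>\<Omega>. if c' \<in> H P then wt \<Omega> d \<rho> H else 0) = wt \<Omega> d \<rho> H * real (\<tau> P)"
      using e by (simp add: mult.commute)
  qed
  also have "\<dots> = Tot * real (\<tau> P)" by (simp add: Tot_def sum_distrib_right)
  finally have sumeq: "(\<Sum>c'\<in>\<Omega>. T c') = Tot * real (\<tau> P)" .
  have "(\<Sum>c'\<in>\<Omega>. T c') = (\<Sum>c'\<in>\<Omega>. T c)" by (rule sum.cong[OF refl], rule Teq, assumption, rule c)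
  then have key: "real (card \<Omega>) * T c = Tot * real (\<tau> P)" using sumeq by simp
  obtain H0 where H0: "is_deal \<Omega> m \<tau> H0" "execution \<Omega> m d H0 \<rho>" using run by (auto simp: is_run_def)
  have wpos: "wt \<Omega> d \<rho> H0 > 0"
  proof (cases "\<rho> = []")
    case False
    then have "\<rho> ! 0 \<in> Pi_prot \<Omega> m d H0 (take 0 \<rho>)" using H0 unfolding execution_def by (metis length_greater_0_conv)
    then have "(G \<Omega> d (H0 0) :: ('c \<Rightarrow> nat \<Rightarrow> 'a) set) \<noteq> {}" by (auto simp: Pi_nil)
    then have "card (G \<Omega> d (H0 0) :: ('c \<Rightarrow> nat \<Rightarrow> 'a) set) > 0" using finite_G[OF fin] by (simp add: card_gt_0_iff)
    then show ?thesis using False by (simp add: wt_def)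
  qed (simp add: wt_def)
  have "H0 \<in> S" using H0 by (simp add: S_def)
  then have "wt \<Omega> d \<rho> H0 \<le> Tot" unfolding Tot_def by (rule member_le_sum) (simp_all add: fS wt_nonneg)
  then have Totpos: "Tot > 0" using wpos by linarith
  have "card {H. is_deal \<Omega> m \<tau> H} > 0" using H0 finite_deals[OF fin] by (auto simp: card_gt_0_iff)
  then have cD: "real (card {H. is_deal \<Omega> m \<tau> H}) \<noteq> 0" by simp
  have cOpos: "real (card \<Omega>) > 0" using c fin by (auto simp: card_gt_0_iff)
  have "cond_prob \<Omega> m \<tau> d (\<lambda>H. c \<in> H P) \<rho> = T c / Tot"
    unfolding cond_prob_def prob_and_run_eq[OF fin] T_def Tot_def S_def using cD by simp
  also have "\<dots> = real (\<tau> P) / real (card \<Omega>)"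
    using key Totpos cOpos by (simp add: field_simps)
  finally show ?thesis using cO by simp
qed


theorem mainTheorem1:
  fixes F :: "'a::{finite,field} itself" and \<Omega> :: "'c set" and m d :: nat and \<tau> :: "nat \<Rightarrow> nat"
  assumes "m > 1"
    and "CARD('a) > m"
    and "d > 0"
    and "\<forall>P\<le>m. \<tau> P > 0"
    and "(\<Sum>P\<le>m. \<tau> P) = CARD('a) ^ (d + 1)"
    and "\<tau> 0 = CARD('a) ^ (d + 1) - CARD('a) ^ d"
    and "\<forall>k\<in>{1..m}. \<tau> k > CARD('a) ^ (d - 1)"
    and "finite \<Omega>" and "card \<Omega> = CARD('a) ^ (d + 1)"
  shows "informative TYPE('a) \<Omega> m \<tau> d \<and> perfectly_safe TYPE('a) \<Omega> m \<tau> d"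
proof
  show "informative TYPE('a) \<Omega> m \<tau> d"
    unfolding informative_def
  proof (intro allI impI notI)
    fix H P and \<rho> :: "('c, 'a) token list"
    assume h: "is_deal \<Omega> m \<tau> H \<and> terminal \<Omega> m d H \<rho> \<and> P \<le> m"
      and ex: "\<exists>H'. is_deal \<Omega> m \<tau> H' \<and> execution \<Omega> m d H' \<rho> \<and> H' \<noteq> H \<and> H' P = H P"
    then obtain H' where H': "is_deal \<Omega> m \<tau> H'" "execution \<Omega> m d H' \<rho>" "H' \<noteq> H" "H' P = H P" by blast
    have "H' = H"
      using informative_core[OF assms(8) assms(9) assms(6) assms(7), of H \<rho> P H'] h H' by blast
    then show False using H'(3) by simp
  qed
  show "perfectly_safe TYPE('a) \<Omega> m \<tau> d"
    unfolding perfectly_safe_def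
  proof (intro allI impI)
    fix c P and \<rho> :: "('c, 'a) token list"
    assume h: "is_run \<Omega> m \<tau> d \<rho> \<and> c \<in> \<Omega> \<and> P \<le> m"
    have cO: "card \<Omega> = (\<Sum>Q\<le>m. \<tau> Q)" using assms(5,9) by simp
    show "cond_prob \<Omega> m \<tau> d (\<lambda>H. c \<in> H P) \<rho> = real (\<tau> P) / real (\<Sum>Q\<le>m. \<tau> Q)"
      using safe_core[OF assms(8) cO, of d \<rho> c P] h by blast
  qed
qed

end
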